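(* Let $K$ be a field, $R=K[x_1,\dots,x_n]$, $\boldsymbol{\lambda}=(\lambda_1,\dots,\lambda_n)$ a vector of positive integers, $L=\mathrm{lcm}(\lambda_1,\dots,\lambda_n)$, $\omega_i=L/\lambda_i$, $\boldsymbol{\omega}=(\omega_1,\dots,\omega_n)$, and $\Gamma=\{\boldsymbol{\alpha}\in\mathbb{N}^n\mid \boldsymbol{\omega}\cdot\boldsymbol{\alpha}\ge L\}$. The following are equivalent: (a) $I(\boldsymbol{\lambda})$ is normal; (b) whenever $\boldsymbol{\alpha}\in\mathbb{N}^n$ and $p$ is a positive integer with $\boldsymbol{\omega}\cdot\boldsymbol{\alpha}\ge pL$, there exist $\boldsymbol{\beta}_1,\dots,\boldsymbol{\beta}_p\in\Gamma$ with $\boldsymbol{\alpha}=\sum_{j=1}^p\boldsymbol{\beta}_j$; (c) whenever $\boldsymbol{\alpha}=(a_1,\dots,a_n)\in\mathbb{N}^n$ with $a_i<\lambda_i$ for all $i$ and $p$ is an integer with $1\le p<n$ and $\boldsymbol{\omega}\cdot\boldsymbol{\alpha}\ge pL$, there exist $\boldsymbol{\beta}_1,\dots,\boldsymbol{\beta}_p\in\Gamma$ with $\boldsymbol{\alpha}=\sum_{j=1}^p\boldsymbol{\beta}_j$.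
   Context: $J(\boldsymbol{\lambda})=(x_1^{\lambda_1},\dots,x_n^{\lambda_n})$ and $I(\boldsymbol{\lambda})=\overline{J(\boldsymbol{\lambda})}$ is its integral closure in $R$; the set $\Gamma$ is exactly the set of exponent vectors of monomials in $I(\boldsymbol{\lambda})$. An ideal is normal if all its positive powers are integrally closed. *)

theory Defs
  imports "HOL-Library.Poly_Mapping"
begin

text \<open>Polynomial ring K[x_v | v in 'v] over a field K, with 'v a finite type of
  variables (n = CARD('v)); polynomials are finitely supported maps from
  monomials (exponent vectors 'v =>0 nat) to coefficients.\<close>

type_synonym ('v, 'k) mpoly = "('v \<Rightarrow>\<^sub>0 nat) \<Rightarrow>\<^sub>0 'k"

definition gen_ideal :: "'a::comm_ring_1 set \<Rightarrow> 'a set" where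
  "gen_ideal G = {x. \<exists>F r. finite F \<and> F \<subseteq> G \<and> x = (\<Sum>g\<in>F. r g * g)}"

definition ideal_prod :: "'a::comm_ring_1 set \<Rightarrow> 'a set \<Rightarrow> 'a set" where
  "ideal_prod I J = gen_ideal {a * b | a b. a \<in> I \<and> b \<in> J}"

fun ideal_pow :: "'a::comm_ring_1 set \<Rightarrow> nat \<Rightarrow> 'a set" where
  "ideal_pow I 0 = UNIV"
| "ideal_pow I (Suc k) = ideal_prod I (ideal_pow I k)"

definition int_closure :: "'a::comm_ring_1 set \<Rightarrow> 'a set" where
  "int_closure I = {f. \<exists>k a. k \<ge> 1 \<and> (\<forall>i\<in>{1..k}. a i \<in> ideal_pow I i) \<and>
       f ^ k + (\<Sum>i=1..k. a i * f ^ (k - i)) = 0}"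

definition normal_ideal :: "'a::comm_ring_1 set \<Rightarrow> bool" where
  "normal_ideal I \<longleftrightarrow> (\<forall>m\<ge>1. int_closure (ideal_pow I m) = ideal_pow I m)"

definition var_pow :: "'v \<Rightarrow> nat \<Rightarrow> ('v, 'k::comm_ring_1) mpoly" where
  "var_pow v e = Poly_Mapping.single (Poly_Mapping.single v e) 1"

definition J_lam :: "('v::finite \<Rightarrow> nat) \<Rightarrow> ('v, 'k::field) mpoly set" where
  "J_lam lam = gen_ideal (range (\<lambda>v. var_pow v (lam v)))"

definition I_lam :: "('v::finite \<Rightarrow> nat) \<Rightarrow> ('v, 'k::field) mpoly set" where
  "I_lam lam = int_closure (J_lam lam)"

definition lcm_lam :: "('v::finite \<Rightarrow> nat) \<Rightarrow> nat" where
  "lcm_lam lam = Lcm (range lam)"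

definition omega :: "('v::finite \<Rightarrow> nat) \<Rightarrow> 'v \<Rightarrow> nat" where
  "omega lam v = lcm_lam lam div lam v"

definition dotw :: "('v::finite \<Rightarrow> nat) \<Rightarrow> ('v \<Rightarrow> nat) \<Rightarrow> nat" where
  "dotw w a = (\<Sum>v\<in>UNIV. w v * a v)"

definition Gamma :: "('v::finite \<Rightarrow> nat) \<Rightarrow> ('v \<Rightarrow> nat) set" where
  "Gamma lam = {a. dotw (omega lam) a \<ge> lcm_lam lam}"

definition decomposable :: "('v::finite \<Rightarrow> nat) \<Rightarrow> ('v \<Rightarrow> nat) \<Rightarrow> nat \<Rightarrow> bool" where
  "decomposable lam a p \<longleftrightarrow>
     (\<exists>\<beta> :: nat \<Rightarrow> 'v \<Rightarrow> nat. (\<forall>j<p. \<beta> j \<in> Gamma lam) \<and> a = (\<lambda>v. \<Sum>j<p. \<beta> j v))"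

end

theory Submission
  imports Defs
begin

lemma gi_intro: "finite F \<Longrightarrow> F \<subseteq> G \<Longrightarrow> x = (\<Sum>g\<in>F. r g * g) \<Longrightarrow> x \<in> gen_ideal G"
  unfolding gen_ideal_def by (intro CollectI exI conjI)

lemma gi_zero: "0 \<in> gen_ideal G"
  by (rule gi_intro[of "{}" _ _ "\<lambda>_. 0"]) auto

lemma gi_base: "g \<in> G \<Longrightarrow> g \<in> gen_ideal G"
  by (rule gi_intro[of "{g}" _ _ "\<lambda>_. 1"]) auto

lemma gi_add:
  assumes "x \<in> gen_ideal G" "y \<in> gen_ideal G" shows "x + y \<in> gen_ideal G"
proof -
  from assms obtain F1 r1 F2 r2 where h: "finite F1" "F1 \<subseteq> G" "x = (\<Sum>g\<in>F1. r1 g * g)"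
    "finite F2" "F2 \<subseteq> G" "y = (\<Sum>g\<in>F2. r2 g * g)" unfolding gen_ideal_def by blast
  define r where "r g = (if g \<in> F1 then r1 g else 0) + (if g \<in> F2 then r2 g else 0)" for g
  have pt: "r g * g = (if g \<in> F1 then r1 g * g else 0) + (if g \<in> F2 then r2 g * g else 0)" for g
    unfolding r_def by (simp add: distrib_right)
  have fin: "finite (F1 \<union> F2)" using h by auto
  have "(\<Sum>g\<in>F1\<union>F2. r g * g) = (\<Sum>g\<in>F1\<union>F2. (if g \<in> F1 then r1 g * g else 0)) + (\<Sum>g\<in>F1\<union>F2. (if g \<in> F2 then r2 g * g else 0))"
    by (simp add: pt sum.distrib)
  also have "\<dots> = (\<Sum>g\<in>(F1\<union>F2) \<inter> F1. r1 g * g) + (\<Sum>g\<in>(F1\<union>F2) \<inter> F2. r2 g * g)"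
    using sum.inter_restrict[OF fin, of "\<lambda>g. r1 g * g" F1] sum.inter_restrict[OF fin, of "\<lambda>g. r2 g * g" F2]
    by simp
  also have "\<dots> = x + y" using h by (simp add: Int_absorb1)
  finally show ?thesis using h fin by (intro gi_intro[of "F1 \<union> F2" _ _ r]) auto
qed

lemma gi_mult:
  assumes "x \<in> gen_ideal G" shows "r * x \<in> gen_ideal G"
proof -
  from assms obtain F s where h: "finite F" "F \<subseteq> G" "x = (\<Sum>g\<in>F. s g * g)"
    unfolding gen_ideal_def by blast
  have "r * x = (\<Sum>g\<in>F. (r * s g) * g)" using h by (simp add: sum_distrib_left mult.assoc)
  thus ?thesis using h by (intro gi_intro[of F _ _ "\<lambda>g. r * s g"]) auto
qed

lemma gi_sum:
  assumes "finite S" "\<And>s. s \<in> S \<Longrightarrow> h s \<in> gen_ideal G" shows "sum h S \<in> gen_ideal G"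
  using assms by (induction S rule: finite_induct) (auto intro: gi_zero gi_add)

lemma gi_keys:
  fixes G :: "('a::comm_monoid_add \<Rightarrow>\<^sub>0 'k::comm_ring_1) set"
  assumes up: "\<And>m d. m \<in> U \<Longrightarrow> d + m \<in> U" and G: "\<And>g. g \<in> G \<Longrightarrow> Poly_Mapping.keys g \<subseteq> U"
  and x: "x \<in> gen_ideal G" shows "Poly_Mapping.keys x \<subseteq> U"
proof -
  from x obtain F s where h: "finite F" "F \<subseteq> G" "x = (\<Sum>g\<in>F. s g * g)"
    unfolding gen_ideal_def by blast
  have "Poly_Mapping.keys (s g * g) \<subseteq> U" if "g \<in> F" for g
  proof -
    have "Poly_Mapping.keys (s g * g) \<subseteq> {a + b | a b. a \<in> Poly_Mapping.keys (s g) \<and> b \<in> Poly_Mapping.keys g}" by (rule keys_mult)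
    also have "\<dots> \<subseteq> U" using G[of g] that h up by blast
    finally show ?thesis .
  qed
  moreover have "Poly_Mapping.keys x \<subseteq> (\<Union>g\<in>F. Poly_Mapping.keys (s g * g))" using h(3) keys_sum[of "\<lambda>g. s g * g" F] by simp
  ultimately show ?thesis by blast
qed

lemma ip_mult: "x \<in> ideal_pow A k \<Longrightarrow> r * x \<in> ideal_pow A k"
  by (cases k) (auto simp: ideal_prod_def intro: gi_mult)

lemma ip_add: "x \<in> ideal_pow A k \<Longrightarrow> y \<in> ideal_pow A k \<Longrightarrow> x + y \<in> ideal_pow A k"
  by (cases k) (auto simp: ideal_prod_def intro: gi_add)

lemma ip_zero: "0 \<in> ideal_pow A k"
  by (cases k) (auto simp: ideal_prod_def intro: gi_zero)

lemma ip_sum: "finite S \<Longrightarrow> (\<And>s. s \<in> S \<Longrightarrow> h s \<in> ideal_pow A k) \<Longrightarrow> sum h S \<in> ideal_pow A k"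
  by (induction S rule: finite_induct) (auto intro: ip_zero ip_add)

lemma ip_gen: "a \<in> A \<Longrightarrow> b \<in> ideal_pow A k \<Longrightarrow> a * b \<in> ideal_pow A (Suc k)"
  unfolding ideal_pow.simps ideal_prod_def by (rule gi_base) blast

lemma sub_int_closure: "A \<subseteq> int_closure A"
proof
  fix f assume f: "f \<in> A"
  have "f * (-1) \<in> ideal_pow A 1" using ip_gen[OF f, of "-1" 0] by simp
  hence "-f \<in> ideal_pow A 1" by simp
  thus "f \<in> int_closure A" unfolding int_closure_def
    by (intro CollectI exI[of _ 1] exI[of _ "\<lambda>_. -f"]) auto
qed

definition wt :: "('v::finite \<Rightarrow> nat) \<Rightarrow> ('v \<Rightarrow>\<^sub>0 nat) \<Rightarrow> nat" where
  "wt w m = dotw w (Poly_Mapping.lookup m)"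

lemma wt_add: "wt w (a + b) = wt w a + wt w b"
  by (simp add: wt_def dotw_def lookup_add distrib_left sum.distrib)

lemma wt_zero[simp]: "wt w 0 = 0"
  by (simp add: wt_def dotw_def)

definition Pc :: "('v::finite \<Rightarrow> nat) \<Rightarrow> nat \<Rightarrow> ('v, 'k::comm_ring_1) mpoly \<Rightarrow> bool" where
  "Pc w c f \<longleftrightarrow> (\<forall>m\<in>Poly_Mapping.keys f. c \<le> wt w m)"

lemma Pc_mult: assumes "Pc w c f" "Pc w d g" shows "Pc w (c + d) (f * g)"
  unfolding Pc_def
proof
  fix m assume "m \<in> Poly_Mapping.keys (f*g)"
  then obtain a b where "m = a + b" "a \<in> Poly_Mapping.keys f" "b \<in> Poly_Mapping.keys g"
    using keys_mult[of f g] by blast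
  then show "c + d \<le> wt w m" using assms by (simp add: Pc_def wt_add add_mono)
qed

lemma Pc_pow: "Pc w c f \<Longrightarrow> Pc w (n * c) (f ^ n)"
proof (induction n)
  case 0 thus ?case by (simp add: Pc_def)
next
  case (Suc n) thus ?case using Pc_mult[of w c f "n*c" "f^n"] by simp
qed

lemma Pc_gi: assumes x: "x \<in> gen_ideal G" and G: "\<And>g. g \<in> G \<Longrightarrow> Pc w c g" shows "Pc w c x"
proof -
  have "Poly_Mapping.keys x \<subseteq> {m. c \<le> wt w m}"
  proof (rule gi_keys[OF _ _ x])
    show "d + m \<in> {m. c \<le> wt w m}" if "m \<in> {m. c \<le> wt w m}" for m d
      using that by (simp add: wt_add)
    show "Poly_Mapping.keys g \<subseteq> {m. c \<le> wt w m}" if "g \<in> G" for g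
      using G[OF that] unfolding Pc_def by blast
  qed
  thus ?thesis unfolding Pc_def by blast
qed

lemma Pc_ip: "(\<And>a. a \<in> A \<Longrightarrow> Pc w c a) \<Longrightarrow> x \<in> ideal_pow A k \<Longrightarrow> Pc w (k * c) x"
proof (induction k arbitrary: x)
  case 0 thus ?case by (simp add: Pc_def)
next
  case (Suc k)
  have gen: "Pc w (c + k*c) g" if "g \<in> {a*b | a b. a \<in> A \<and> b \<in> ideal_pow A k}" for g
  proof -
    from that obtain a b where g: "g = a * b" "a \<in> A" "b \<in> ideal_pow A k" by blast
    show ?thesis unfolding g(1) by (rule Pc_mult) (use g Suc.prems(1) Suc.IH in auto)
  qed
  have "x \<in> gen_ideal {a*b | a b. a \<in> A \<and> b \<in> ideal_pow A k}"
    using Suc.prems(2) by (simp add: ideal_prod_def)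
  from Pc_gi[OF this gen] show ?case by simp
qed

definition enc :: "'v::finite \<Rightarrow> nat" where "enc = (SOME f. inj f)"

lemma inj_enc: "inj (enc :: 'v::finite \<Rightarrow> nat)"
proof -
  obtain f :: "'v \<Rightarrow> nat" and n where "inj_on f UNIV"
    using finite_imp_inj_to_nat_seg[of "UNIV :: 'v set"] by auto
  hence "\<exists>f :: 'v \<Rightarrow> nat. inj f" by blast
  thus ?thesis unfolding enc_def by (rule someI_ex)
qed

definition Tk :: "('v::finite \<Rightarrow> nat) \<Rightarrow> ('v \<Rightarrow>\<^sub>0 nat) \<Rightarrow> (nat \<Rightarrow>\<^sub>0 nat)" where
  "Tk w m = Poly_Mapping.single 0 (wt w m) + (\<Sum>v\<in>UNIV. Poly_Mapping.single (Suc (enc v)) (Poly_Mapping.lookup m v))"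

lemma Tk_add: "Tk w (a + b) = Tk w a + Tk w b"
  by (simp add: Tk_def wt_add single_add lookup_add sum.distrib add_ac)

lemma lookup_Tk_Suc: "Poly_Mapping.lookup (Tk w m) (Suc (enc v)) = Poly_Mapping.lookup m v"
proof -
  have "(\<Sum>u\<in>UNIV. Poly_Mapping.lookup (Poly_Mapping.single (Suc (enc u)) (Poly_Mapping.lookup m u)) (Suc (enc v)))
      = (\<Sum>u\<in>UNIV. if u = v then Poly_Mapping.lookup m u else 0)"
    by (rule sum.cong) (auto simp: lookup_single when_def inj_eq[OF inj_enc])
  thus ?thesis by (simp add: Tk_def lookup_add lookup_sum lookup_single)
qed

lemma lookup_Tk_0: "Poly_Mapping.lookup (Tk w m) 0 = wt w m"
  by (simp add: Tk_def lookup_add lookup_sum lookup_single)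

lemma Tk_inj: "inj (Tk w)"
proof (rule injI)
  fix a b assume "Tk w a = Tk w b"
  hence "Poly_Mapping.lookup a v = Poly_Mapping.lookup b v" for v
    using lookup_Tk_Suc[of w a v] lookup_Tk_Suc[of w b v] by simp
  thus "a = b" by (rule poly_mapping_eqI)
qed

lemma le_lookup0: "(p :: nat \<Rightarrow>\<^sub>0 nat) \<le> q \<Longrightarrow> Poly_Mapping.lookup p 0 \<le> Poly_Mapping.lookup q 0"
  unfolding less_eq_poly_mapping.rep_eq less_fun_def
  by (metis bot_nat_0.not_eq_extremum less_or_eq_imp_le order_refl)

lemma Tk_le_wt: "Tk w a \<le> Tk w b \<Longrightarrow> wt w a \<le> wt w b"
  using le_lookup0 lookup_Tk_0 by metis

lemma le_sum_eq:
  fixes x y u v :: "'b::{ordered_cancel_comm_monoid_add, linorder}"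
  assumes "y \<le> x" "v \<le> u" "x + u = y + v" shows "x = y"
proof (rule ccontr)
  assume "x \<noteq> y" hence "y < x" using assms by simp
  hence "y + v < x + u" using assms(2) by (rule add_less_le_mono)
  thus False using assms(3) by simp
qed

lemma prod_low:
  fixes f g :: "('v::finite, 'k::comm_ring_1) mpoly"
  assumes ha: "\<forall>a\<in>Poly_Mapping.keys f. Tk w a0 \<le> Tk w a" and hb: "\<forall>b\<in>Poly_Mapping.keys g. Tk w b0 \<le> Tk w b"
  shows "Poly_Mapping.lookup (f*g) (a0+b0) = Poly_Mapping.lookup f a0 * Poly_Mapping.lookup g b0"
    and "\<forall>m\<in>Poly_Mapping.keys (f*g). Tk w (a0+b0) \<le> Tk w m"
proof -
  have inner: "Poly_Mapping.lookup f l * (\<Sum>q. Poly_Mapping.lookup g q when a0 + b0 = l + q)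
      = (Poly_Mapping.lookup f a0 * Poly_Mapping.lookup g b0 when l = a0)" for l
  proof (cases "l = a0")
    case True
    have "(\<Sum>q. Poly_Mapping.lookup g q when a0 + b0 = l + q) = (\<Sum>q. Poly_Mapping.lookup g q when q = b0)"
    proof (rule Sum_any.cong)
      fix q
      have "a0 + b0 = a0 + q \<longleftrightarrow> q = b0"
      proof
        assume "a0 + b0 = a0 + q"
        hence "Tk w a0 + Tk w b0 = Tk w a0 + Tk w q" by (metis Tk_add)
        hence "Tk w q = Tk w b0" by simp
        thus "q = b0" using Tk_inj injD by metis
      qed simp
      thus "(Poly_Mapping.lookup g q when a0 + b0 = l + q) = (Poly_Mapping.lookup g q when q = b0)"
        using True by simp
    qed
    thus ?thesis using True by simp
  next
    case False
    show ?thesis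
    proof (cases "Poly_Mapping.lookup f l = 0")
      case True thus ?thesis using False by simp
    next
      case nz: False
      hence lk: "l \<in> Poly_Mapping.keys f" by (simp add: in_keys_iff)
      have "(Poly_Mapping.lookup g q when a0 + b0 = l + q) = 0" for q
      proof (rule ccontr)
        assume "(Poly_Mapping.lookup g q when a0 + b0 = l + q) \<noteq> 0"
        hence q: "q \<in> Poly_Mapping.keys g" and e: "a0 + b0 = l + q" by (auto simp: in_keys_iff when_def split: if_splits)
        have "Tk w l + Tk w q = Tk w a0 + Tk w b0" using e by (metis Tk_add)
        hence "Tk w l = Tk w a0" using le_sum_eq ha hb lk q by metis
        hence "l = a0" using Tk_inj injD by metis
        thus False using False by simp
      qed
      thus ?thesis using False by simp
    qed
  qed
  show "Poly_Mapping.lookup (f*g) (a0+b0) = Poly_Mapping.lookup f a0 * Poly_Mapping.lookup g b0"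
    unfolding lookup_mult inner by simp
  show "\<forall>m\<in>Poly_Mapping.keys (f*g). Tk w (a0+b0) \<le> Tk w m"
  proof
    fix m assume "m \<in> Poly_Mapping.keys (f*g)"
    then obtain a b where "m = a + b" "a \<in> Poly_Mapping.keys f" "b \<in> Poly_Mapping.keys g"
      using keys_mult[of f g] by blast
    thus "Tk w (a0+b0) \<le> Tk w m" using ha hb by (simp add: Tk_add add_mono)
  qed
qed

lemma pow_low:
  fixes f :: "('v::finite,'k::comm_ring_1) mpoly"
  assumes h: "\<forall>a\<in>Poly_Mapping.keys f. Tk w a0 \<le> Tk w a"
  shows "\<exists>K. Poly_Mapping.lookup (f^n) K = Poly_Mapping.lookup f a0 ^ n \<and>
    (\<forall>m\<in>Poly_Mapping.keys (f^n). Tk w K \<le> Tk w m) \<and> wt w K = n * wt w a0"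
proof (induction n)
  case 0 show ?case by (intro exI[of _ 0]) (simp add: keys_one)
next
  case (Suc n)
  then obtain K where K: "Poly_Mapping.lookup (f^n) K = Poly_Mapping.lookup f a0 ^ n"
    "\<forall>m\<in>Poly_Mapping.keys (f^n). Tk w K \<le> Tk w m" "wt w K = n * wt w a0" by blast
  have "Poly_Mapping.lookup (f * f^n) (a0 + K) = Poly_Mapping.lookup f a0 * Poly_Mapping.lookup (f^n) K"
    "\<forall>m\<in>Poly_Mapping.keys (f*f^n). Tk w (a0+K) \<le> Tk w m"
    using prod_low[OF h K(2)] by auto
  then show ?case by (intro exI[of _ "a0+K"]) (simp add: K wt_add)
qed

lemma val:
  fixes f :: "('v::finite,'k::field) mpoly"
  assumes k: "k \<ge> 1" and a: "\<forall>i\<in>{1..k}. Pc w (i*c) (a i)"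
    and eq: "f^k + (\<Sum>i=1..k. a i * f^(k-i)) = 0"
  shows "Pc w c f"
proof (rule ccontr)
  assume "\<not> Pc w c f"
  then obtain m where m: "m \<in> Poly_Mapping.keys f" "wt w m < c" unfolding Pc_def by (auto simp: not_le)
  define S where "S = Tk w ` Poly_Mapping.keys f"
  have fS: "finite S" "S \<noteq> {}" using m by (auto simp: S_def)
  hence "Min S \<in> S" by simp
  then obtain a0 where a0: "a0 \<in> Poly_Mapping.keys f" "Tk w a0 = Min S" by (auto simp: S_def)
  have low: "\<forall>a\<in>Poly_Mapping.keys f. Tk w a0 \<le> Tk w a" using fS a0 by (auto simp: S_def)
  define d where "d = wt w a0"
  have "d \<le> wt w m" using low m Tk_le_wt unfolding d_def by blast
  hence dc: "d < c" using m by simp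
  have Pd: "Pc w d f" using low Tk_le_wt unfolding Pc_def d_def by blast
  obtain K where K: "Poly_Mapping.lookup (f^k) K = Poly_Mapping.lookup f a0 ^ k" "wt w K = k * d"
    using pow_low[OF low, of k] d_def by auto
  have nz: "Poly_Mapping.lookup (f^k) K \<noteq> 0" using K a0 by (simp add: in_keys_iff)
  have z: "Poly_Mapping.lookup (a i * f^(k-i)) K = 0" if i: "i \<in> {1..k}" for i
  proof -
    have "Pc w (i*c + (k-i)*d) (a i * f^(k-i))"
      using Pc_mult[OF a[rule_format, OF i] Pc_pow[OF Pd]] .
    moreover have "wt w K < i*c + (k-i)*d"
    proof -
      have "k = i + (k-i)" using i by simp
      hence "k*d = i*d + (k-i)*d" by (metis add_mult_distrib)
      moreover have "i*d < i*c" using i dc by simp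
      ultimately show ?thesis using K by simp
    qed
    ultimately have "K \<notin> Poly_Mapping.keys (a i * f^(k-i))" unfolding Pc_def by auto
    thus ?thesis by (simp add: in_keys_iff)
  qed
  have "Poly_Mapping.lookup (f^k + (\<Sum>i=1..k. a i * f^(k-i))) K = Poly_Mapping.lookup (f^k) K"
    using z by (simp add: lookup_add lookup_sum)
  with eq nz show False by simp
qed

definition mon :: "('v \<Rightarrow>\<^sub>0 nat) \<Rightarrow> ('v, 'k::comm_ring_1) mpoly" where
  "mon a = Poly_Mapping.single a 1"

definition Dv :: "('v::finite \<Rightarrow> nat) \<Rightarrow> ('v \<Rightarrow>\<^sub>0 nat) \<Rightarrow> nat" where
  "Dv lam a = (\<Sum>v\<in>UNIV. Poly_Mapping.lookup a v div lam v)"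

lemma mon_add: "mon (a + b) = mon a * mon b"
  by (simp add: mon_def mult_single)

lemma mon_0: "mon 0 = 1"
  by (simp add: mon_def)

lemma keys_mon: "Poly_Mapping.keys (mon a :: ('v, 'k::comm_ring_1) mpoly) = {a}"
  by (simp add: mon_def)

lemma mon_pow: "(mon a :: ('v, 'k::comm_ring_1) mpoly) ^ n = mon (\<Sum>i<n. a)"
  by (induction n) (simp_all add: mon_0 mon_add add.commute)

lemma lookup_nsum: "Poly_Mapping.lookup (\<Sum>i<n. (a :: 'v \<Rightarrow>\<^sub>0 nat)) v = n * Poly_Mapping.lookup a v"
  by (simp add: lookup_sum sum_constant)

lemma split_lemma:
  fixes A :: "('v::finite,'k::comm_ring_1) mpoly set"
  assumes pos: "\<forall>v. lam v > 0" and gens: "\<forall>v. mon (Poly_Mapping.single v (lam v)) \<in> A"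
  shows "Dv lam \<alpha> \<ge> p + r \<Longrightarrow> \<exists>\<alpha>1 \<alpha>2. \<alpha> = \<alpha>1 + \<alpha>2 \<and> mon \<alpha>1 \<in> ideal_pow A p \<and> Dv lam \<alpha>2 \<ge> r"
proof (induction p arbitrary: \<alpha>)
  case 0 show ?case by (intro exI[of _ 0] exI[of _ \<alpha>]) (use 0 in simp)
next
  case (Suc p)
  have "\<exists>v. lam v \<le> Poly_Mapping.lookup \<alpha> v"
  proof (rule ccontr)
    assume "\<not> ?thesis" hence "\<forall>v. Poly_Mapping.lookup \<alpha> v div lam v = 0" by (simp add: not_le)
    hence "Dv lam \<alpha> = 0" by (simp add: Dv_def)
    with Suc.prems show False by simp
  qed
  then obtain v where v: "lam v \<le> Poly_Mapping.lookup \<alpha> v" by blast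
  define \<alpha>' where "\<alpha>' = \<alpha> - Poly_Mapping.single v (lam v)"
  have la: "Poly_Mapping.lookup \<alpha>' u = Poly_Mapping.lookup \<alpha> u - (if u = v then lam v else 0)" for u
    by (simp add: \<alpha>'_def lookup_minus lookup_single when_def)
  have aeq: "\<alpha> = Poly_Mapping.single v (lam v) + \<alpha>'"
    by (rule poly_mapping_eqI) (use v in \<open>auto simp: la lookup_add lookup_single when_def\<close>)
  have "Dv lam \<alpha> = Dv lam \<alpha>' + 1"
  proof -
    have "Poly_Mapping.lookup \<alpha> u div lam u = Poly_Mapping.lookup \<alpha>' u div lam u + (if u = v then 1 else 0)" for u
      using v pos le_div_geq[of "lam v" "Poly_Mapping.lookup \<alpha> v"] by (auto simp: la)
    hence "Dv lam \<alpha> = (\<Sum>u\<in>UNIV. Poly_Mapping.lookup \<alpha>' u div lam u) + (\<Sum>u\<in>UNIV. if u = v then 1 else 0)"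
      by (simp add: Dv_def sum.distrib)
    thus ?thesis by (simp add: Dv_def)
  qed
  hence "Dv lam \<alpha>' \<ge> p + r" using Suc.prems by simp
  from Suc.IH[OF this] obtain \<alpha>1 \<alpha>2 where h: "\<alpha>' = \<alpha>1 + \<alpha>2" "mon \<alpha>1 \<in> ideal_pow A p" "Dv lam \<alpha>2 \<ge> r"
    by blast
  have "mon (Poly_Mapping.single v (lam v) + \<alpha>1) \<in> ideal_pow A (Suc p)"
    unfolding mon_add by (rule ip_gen) (use gens h in auto)
  thus ?case using h aeq
    by (intro exI[of _ "Poly_Mapping.single v (lam v) + \<alpha>1"] exI[of _ \<alpha>2]) (simp add: add.assoc)
qed

lemma int_pow:
  assumes "L \<ge> 1" "y ^ L \<in> ideal_pow A L" shows "y \<in> int_closure A"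
proof -
  define a where "a i = (if i = L then - (y ^ L) else 0)" for i
  have "a i \<in> ideal_pow A i" for i
  proof (cases "i = L")
    case True
    have "(-1) * y ^ L \<in> ideal_pow A L" using assms(2) by (rule ip_mult)
    thus ?thesis using True by (simp add: a_def)
  qed (simp add: a_def ip_zero)
  moreover have "(\<Sum>i=1..L. a i * y ^ (L - i)) = - (y ^ L)"
  proof -
    have "(\<Sum>i=1..L. a i * y ^ (L - i)) = (\<Sum>i=1..L. if i = L then - (y ^ L) else 0)"
      by (rule sum.cong) (auto simp: a_def)
    also have "\<dots> = - (y ^ L)" using assms(1) by simp
    finally show ?thesis .
  qed
  ultimately show ?thesis unfolding int_closure_def using assms(1)
    by (intro CollectI exI[of _ L] exI[of _ a]) auto
qed

lemma L_pos: assumes pos: "\<forall>v. lam v > 0" shows "lcm_lam lam > 0"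
proof -
  have "0 \<notin> range lam" using pos by (metis gr_implies_not0 imageE)
  moreover have fin: "finite (range lam)" by (rule finite_imageI) simp
  ultimately have "Lcm (range lam) \<noteq> 0" using Lcm_0_iff[OF fin] by blast
  thus ?thesis unfolding lcm_lam_def by (metis neq0_conv)
qed

lemma om_lam: "omega lam v * lam v = lcm_lam lam"
proof -
  have "lam v dvd lcm_lam lam" unfolding lcm_lam_def by (rule dvd_Lcm) simp
  thus ?thesis unfolding omega_def by simp
qed

lemma wt_gen: "wt (omega lam) (Poly_Mapping.single v (lam v)) = lcm_lam lam"
proof -
  have "wt (omega lam) (Poly_Mapping.single v (lam v)) = (\<Sum>u\<in>UNIV. if u = v then omega lam v * lam v else 0)"
    unfolding wt_def dotw_def by (rule sum.cong) (auto simp: lookup_single when_def)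
  thus ?thesis by (simp add: om_lam)
qed

lemma Dv_nsum: assumes pos: "\<forall>v. lam v > 0"
  shows "Dv lam (\<Sum>i<lcm_lam lam. \<beta>) = wt (omega lam) \<beta>"
  unfolding Dv_def wt_def dotw_def lookup_nsum
proof (rule sum.cong)
  fix v
  have e: "lcm_lam lam * Poly_Mapping.lookup \<beta> v = (omega lam v * Poly_Mapping.lookup \<beta> v) * lam v"
    using om_lam[of lam v] by (metis mult.assoc mult.commute)
  have "lcm_lam lam * Poly_Mapping.lookup \<beta> v div lam v = (omega lam v * Poly_Mapping.lookup \<beta> v) * lam v div lam v"
    by (simp only: e)
  also have "\<dots> = omega lam v * Poly_Mapping.lookup \<beta> v" using pos by simp
  finally show "lcm_lam lam * Poly_Mapping.lookup \<beta> v div lam v = omega lam v * Poly_Mapping.lookup \<beta> v" .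
qed simp

lemma J_Pc: "f \<in> (J_lam lam :: ('v::finite,'k::field) mpoly set) \<Longrightarrow> Pc (omega lam) (lcm_lam lam) f"
  unfolding J_lam_def
proof (erule Pc_gi)
  fix g :: "('v,'k) mpoly" assume "g \<in> range (\<lambda>v. var_pow v (lam v))"
  then obtain v where "g = mon (Poly_Mapping.single v (lam v))" by (auto simp: var_pow_def mon_def)
  thus "Pc (omega lam) (lcm_lam lam) g" by (simp add: Pc_def keys_mon wt_gen)
qed

lemma I_Pc: assumes f: "f \<in> (I_lam lam :: ('v::finite,'k::field) mpoly set)"
  shows "Pc (omega lam) (lcm_lam lam) f"
proof -
  from f obtain k a where h: "k \<ge> 1" "\<forall>i\<in>{1..k}. a i \<in> ideal_pow (J_lam lam) i"
    "f ^ k + (\<Sum>i=1..k. a i * f ^ (k - i)) = 0"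
    unfolding I_lam_def int_closure_def by blast
  have "\<forall>i\<in>{1..k}. Pc (omega lam) (i * lcm_lam lam) (a i)"
    using h(2) Pc_ip[of "J_lam lam" "omega lam" "lcm_lam lam"] J_Pc by blast
  from val[OF h(1) this h(3)] show ?thesis .
qed

lemma gen_J: "mon (Poly_Mapping.single v (lam v)) \<in> (J_lam lam :: ('v::finite,'k::field) mpoly set)"
  unfolding J_lam_def by (rule gi_base) (auto simp: var_pow_def mon_def)

lemma gen_I: "mon (Poly_Mapping.single v (lam v)) \<in> (I_lam lam :: ('v::finite,'k::field) mpoly set)"
  unfolding I_lam_def using gen_J sub_int_closure by blast

lemma mono_I: assumes pos: "\<forall>v. lam v > 0" and w: "wt (omega lam) \<beta> \<ge> lcm_lam lam"
  shows "(mon \<beta> :: ('v::finite,'k::field) mpoly) \<in> I_lam lam"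
proof -
  let ?L = "lcm_lam lam"
  have "Dv lam (\<Sum>i<?L. \<beta>) \<ge> ?L + 0" using Dv_nsum[OF pos] w by simp
  from split_lemma[OF pos, of "J_lam lam :: ('v,'k) mpoly set", OF _ this] gen_J
  obtain \<alpha>1 \<alpha>2 where h: "(\<Sum>i<?L. \<beta>) = \<alpha>1 + \<alpha>2" "(mon \<alpha>1 :: ('v,'k) mpoly) \<in> ideal_pow (J_lam lam) ?L"
    by blast
  have "(mon \<beta> :: ('v,'k) mpoly) ^ ?L = mon \<alpha>2 * mon \<alpha>1"
    by (simp add: mon_pow h(1) mon_add mult.commute)
  also have "\<dots> \<in> ideal_pow (J_lam lam) ?L" using h(2) by (rule ip_mult)
  finally have "(mon \<beta> :: ('v,'k) mpoly) ^ ?L \<in> ideal_pow (J_lam lam) ?L" .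
  moreover have "?L \<ge> 1" using L_pos[OF pos] by simp
  ultimately show ?thesis unfolding I_lam_def using int_pow by blast
qed

lemma H_lemma: assumes pos: "\<forall>v. lam v > 0"
  shows "Dv lam \<gamma> \<ge> p * k \<Longrightarrow> (mon \<gamma> :: ('v::finite,'k::field) mpoly) \<in> ideal_pow (ideal_pow (I_lam lam) p) k"
proof (induction k arbitrary: \<gamma>)
  case 0 show ?case by simp
next
  case (Suc k)
  hence "Dv lam \<gamma> \<ge> p + p * k" by simp
  from split_lemma[OF pos, of "I_lam lam :: ('v,'k) mpoly set", OF _ this] gen_I
  obtain \<alpha>1 \<alpha>2 where h: "\<gamma> = \<alpha>1 + \<alpha>2" "(mon \<alpha>1 :: ('v,'k) mpoly) \<in> ideal_pow (I_lam lam) p"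
    "Dv lam \<alpha>2 \<ge> p * k" by blast
  have "(mon \<alpha>1 :: ('v,'k) mpoly) * mon \<alpha>2 \<in> ideal_pow (ideal_pow (I_lam lam) p) (Suc k)"
    by (rule ip_gen[OF h(2) Suc.IH[OF h(3)]])
  thus ?case by (simp add: h(1) mon_add)
qed

lemma Gamma_up: "a \<in> Gamma lam \<Longrightarrow> (\<lambda>v. d v + a v) \<in> Gamma lam"
proof -
  assume a: "a \<in> Gamma lam"
  have "dotw (omega lam) a \<le> dotw (omega lam) (\<lambda>v. d v + a v)"
    unfolding dotw_def by (rule sum_mono) simp
  thus ?thesis using a by (simp add: Gamma_def)
qed

lemma dec_up: assumes "decomposable lam a (Suc q)" shows "decomposable lam (\<lambda>v. d v + a v) (Suc q)"
proof -
  from assms obtain \<beta> where b: "\<forall>j<Suc q. \<beta> j \<in> Gamma lam" "a = (\<lambda>v. \<Sum>j<Suc q. \<beta> j v)"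
    unfolding decomposable_def by blast
  define \<beta>' where "\<beta>' j = (if j = 0 then (\<lambda>v. d v + \<beta> 0 v) else \<beta> j)" for j
  have "\<forall>j<Suc q. \<beta>' j \<in> Gamma lam" using b(1) Gamma_up by (auto simp: \<beta>'_def)
  moreover have "(\<lambda>v. d v + a v) = (\<lambda>v. \<Sum>j<Suc q. \<beta>' j v)"
  proof
    fix v
    have "(\<Sum>j<Suc q. \<beta>' j v) = \<beta>' 0 v + (\<Sum>j<q. \<beta>' (Suc j) v)" by (rule sum.lessThan_Suc_shift)
    moreover have "(\<Sum>j<Suc q. \<beta> j v) = \<beta> 0 v + (\<Sum>j<q. \<beta> (Suc j) v)" by (rule sum.lessThan_Suc_shift)
    ultimately show "d v + a v = (\<Sum>j<Suc q. \<beta>' j v)" using b(2) by (simp add: \<beta>'_def)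
  qed
  ultimately show ?thesis unfolding decomposable_def by blast
qed

lemma dec_add: assumes "b \<in> Gamma lam" "decomposable lam a q"
  shows "decomposable lam (\<lambda>v. a v + b v) (Suc q)"
proof -
  from assms obtain \<beta> where h: "\<forall>j<q. \<beta> j \<in> Gamma lam" "a = (\<lambda>v. \<Sum>j<q. \<beta> j v)"
    unfolding decomposable_def by blast
  define \<beta>' where "\<beta>' j = (if j < q then \<beta> j else b)" for j
  have "\<forall>j<Suc q. \<beta>' j \<in> Gamma lam" using h(1) assms(1) by (auto simp: \<beta>'_def)
  moreover have "(\<lambda>v. a v + b v) = (\<lambda>v. \<Sum>j<Suc q. \<beta>' j v)"
    using h(2) by (simp add: \<beta>'_def)
  ultimately show ?thesis unfolding decomposable_def by blast
qed

lemma dec_1: "b \<in> Gamma lam \<Longrightarrow> decomposable lam b 1"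
  unfolding decomposable_def by (intro exI[of _ "\<lambda>_. b"]) simp

lemma keys_Ip: assumes pos: "\<forall>v. lam v > 0"
  shows "f \<in> ideal_pow (I_lam lam :: ('v::finite,'k::field) mpoly set) (Suc q) \<Longrightarrow>
    m \<in> Poly_Mapping.keys f \<Longrightarrow> decomposable lam (Poly_Mapping.lookup m) (Suc q)"
proof (induction q arbitrary: f m)
  case 0
  have "Pc (omega lam) (1 * lcm_lam lam) f"
    using Pc_ip[of "I_lam lam" "omega lam" "lcm_lam lam" f 1] I_Pc 0(1) by auto
  hence "Poly_Mapping.lookup m \<in> Gamma lam" using 0(2) by (simp add: Pc_def Gamma_def wt_def)
  thus ?case using dec_1 by simp
next
  case (Suc q)
  let ?U = "{m. decomposable lam (Poly_Mapping.lookup m) (Suc (Suc q))}"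
  have "Poly_Mapping.keys f \<subseteq> ?U"
  proof (rule gi_keys[of ?U])
    show "d + m \<in> ?U" if "m \<in> ?U" for m d
      using that dec_up[of lam "Poly_Mapping.lookup m" "Suc q" "Poly_Mapping.lookup d"]
      by (simp add: lookup_add[abs_def])
    show "f \<in> gen_ideal {a * b |a b. a \<in> I_lam lam \<and> b \<in> ideal_pow (I_lam lam) (Suc q)}"
      using Suc.prems(1) by (simp add: ideal_prod_def)
  next
    fix g assume "g \<in> {a * b |a b. a \<in> (I_lam lam :: ('v,'k) mpoly set) \<and> b \<in> ideal_pow (I_lam lam) (Suc q)}"
    then obtain a b where g: "g = a * b" "a \<in> I_lam lam" "b \<in> ideal_pow (I_lam lam) (Suc q)" by blast
    show "Poly_Mapping.keys g \<subseteq> ?U"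
    proof
      fix m assume "m \<in> Poly_Mapping.keys g"
      then obtain x y where xy: "m = x + y" "x \<in> Poly_Mapping.keys a" "y \<in> Poly_Mapping.keys b"
        using keys_mult[of a b] g(1) by blast
      have "Poly_Mapping.lookup x \<in> Gamma lam" using I_Pc[OF g(2)] xy(2) by (simp add: Pc_def Gamma_def wt_def)
      moreover have "decomposable lam (Poly_Mapping.lookup y) (Suc q)" using Suc.IH[OF g(3) xy(3)] .
      ultimately have "decomposable lam (\<lambda>v. Poly_Mapping.lookup y v + Poly_Mapping.lookup x v) (Suc (Suc q))"
        by (rule dec_add)
      thus "m \<in> ?U" using xy(1) by (simp add: lookup_add[abs_def] add.commute)
    qed
  qed
  thus ?case using Suc.prems(2) by blast
qed

lemma dec_I: assumes pos: "\<forall>v. lam v > 0"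
  shows "\<forall>j<p. \<beta> j \<in> Gamma lam \<Longrightarrow>
    (mon (Abs_poly_mapping (\<lambda>v. \<Sum>j<p. \<beta> j v)) :: ('v::finite,'k::field) mpoly) \<in> ideal_pow (I_lam lam) p"
proof (induction p)
  case 0 show ?case by simp
next
  case (Suc p)
  have e: "Abs_poly_mapping (\<lambda>v. \<Sum>j<Suc p. \<beta> j v) = Abs_poly_mapping (\<beta> p) + Abs_poly_mapping (\<lambda>v. \<Sum>j<p. \<beta> j v)"
    by (rule poly_mapping_eqI) (simp add: lookup_add)
  have m: "(mon (Abs_poly_mapping (\<beta> p)) :: ('v,'k) mpoly) \<in> I_lam lam"
    using Suc.prems by (intro mono_I[OF pos]) (simp add: wt_def Gamma_def)
  have IH: "(mon (Abs_poly_mapping (\<lambda>v. \<Sum>j<p. \<beta> j v)) :: ('v,'k) mpoly) \<in> ideal_pow (I_lam lam) p"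
    using Suc.IH Suc.prems by simp
  have "(mon (Abs_poly_mapping (\<beta> p)) :: ('v,'k) mpoly) * mon (Abs_poly_mapping (\<lambda>v. \<Sum>j<p. \<beta> j v))
     \<in> ideal_pow (I_lam lam) (Suc p)" by (rule ip_gen[OF m IH])
  thus ?case by (simp only: e mon_add)
qed

lemma poly_expand: "f = (\<Sum>\<alpha>\<in>Poly_Mapping.keys f. Poly_Mapping.single \<alpha> (Poly_Mapping.lookup f \<alpha>))"
proof (rule poly_mapping_eqI)
  fix k
  have "Poly_Mapping.lookup (\<Sum>\<alpha>\<in>Poly_Mapping.keys f. Poly_Mapping.single \<alpha> (Poly_Mapping.lookup f \<alpha>)) k
      = (\<Sum>\<alpha>\<in>Poly_Mapping.keys f. if \<alpha> = k then Poly_Mapping.lookup f k else 0)"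
    unfolding lookup_sum by (rule sum.cong) (auto simp: lookup_single when_def)
  also have "\<dots> = Poly_Mapping.lookup f k" by (simp add: in_keys_iff)
  finally show "Poly_Mapping.lookup f k = Poly_Mapping.lookup (\<Sum>\<alpha>\<in>Poly_Mapping.keys f. Poly_Mapping.single \<alpha> (Poly_Mapping.lookup f \<alpha>)) k"
    by simp
qed

lemma single_mon: "Poly_Mapping.single \<alpha> c = Poly_Mapping.single 0 c * (mon \<alpha> :: ('v,'k::comm_ring_1) mpoly)"
  by (simp add: mon_def mult_single)

lemma normal_iff_b:
  fixes lam :: "'v::finite \<Rightarrow> nat"
  assumes pos: "\<forall>v. lam v > 0"
  shows "normal_ideal (I_lam lam :: ('v, 'k::field) mpoly set) \<longleftrightarrow>
           (\<forall>a p. p \<ge> 1 \<and> dotw (omega lam) a \<ge> p * lcm_lam lam \<longrightarrow> decomposable lam a p)"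
proof
  assume N: "normal_ideal (I_lam lam :: ('v, 'k) mpoly set)"
  show "\<forall>a p. p \<ge> 1 \<and> dotw (omega lam) a \<ge> p * lcm_lam lam \<longrightarrow> decomposable lam a p"
  proof (intro allI impI)
    fix a p assume ap: "p \<ge> 1 \<and> dotw (omega lam) a \<ge> p * lcm_lam lam"
    let ?L = "lcm_lam lam"
    define \<alpha> where "\<alpha> = Abs_poly_mapping a"
    have la: "Poly_Mapping.lookup \<alpha> = a" by (simp add: \<alpha>_def)
    have "Dv lam (\<Sum>i<?L. \<alpha>) \<ge> p * ?L" using Dv_nsum[OF pos, of \<alpha>] ap by (simp add: wt_def la)
    from H_lemma[OF pos this]
    have "(mon \<alpha> :: ('v,'k) mpoly) ^ ?L \<in> ideal_pow (ideal_pow (I_lam lam) p) ?L"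
      by (simp add: mon_pow)
    moreover have "?L \<ge> 1" using L_pos[OF pos] by simp
    ultimately have "(mon \<alpha> :: ('v,'k) mpoly) \<in> int_closure (ideal_pow (I_lam lam) p)"
      using int_pow by blast
    hence m: "(mon \<alpha> :: ('v,'k) mpoly) \<in> ideal_pow (I_lam lam) p" using N ap unfolding normal_ideal_def by simp
    obtain q where q: "p = Suc q" using ap by (cases p) auto
    have "decomposable lam (Poly_Mapping.lookup \<alpha>) (Suc q)"
      using keys_Ip[OF pos, of "mon \<alpha> :: ('v,'k) mpoly" q \<alpha>] m q by (simp add: keys_mon)
    thus "decomposable lam a p" using la q by simp
  qed
next
  assume B: "\<forall>a p. p \<ge> 1 \<and> dotw (omega lam) a \<ge> p * lcm_lam lam \<longrightarrow> decomposable lam a p"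
  let ?I = "I_lam lam :: ('v, 'k) mpoly set"
  let ?L = "lcm_lam lam"
  show "normal_ideal ?I" unfolding normal_ideal_def
  proof (intro allI impI equalityI)
    fix m :: nat assume m1: "m \<ge> 1"
    show "ideal_pow ?I m \<subseteq> int_closure (ideal_pow ?I m)" by (rule sub_int_closure)
    show "int_closure (ideal_pow ?I m) \<subseteq> ideal_pow ?I m"
    proof
      fix f assume "f \<in> int_closure (ideal_pow ?I m)"
      then obtain k a where h: "k \<ge> 1" "\<forall>i\<in>{1..k}. a i \<in> ideal_pow (ideal_pow ?I m) i"
        "f ^ k + (\<Sum>i=1..k. a i * f ^ (k - i)) = 0"
        unfolding int_closure_def by blast
      have Im: "Pc (omega lam) (m * ?L) g" if "g \<in> ideal_pow ?I m" for g
        using Pc_ip[of ?I "omega lam" ?L g m] I_Pc that by blast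
      have "\<forall>i\<in>{1..k}. Pc (omega lam) (i * (m * ?L)) (a i)"
        using h(2) Pc_ip[of "ideal_pow ?I m" "omega lam" "m * ?L"] Im by blast
      from val[OF h(1) this h(3)] have Pf: "Pc (omega lam) (m * ?L) f" .
      have "(mon \<alpha> :: ('v,'k) mpoly) \<in> ideal_pow ?I m" if "\<alpha> \<in> Poly_Mapping.keys f" for \<alpha>
      proof -
        have "dotw (omega lam) (Poly_Mapping.lookup \<alpha>) \<ge> m * ?L" using Pf that by (simp add: Pc_def wt_def)
        hence "decomposable lam (Poly_Mapping.lookup \<alpha>) m" using B m1 by blast
        then obtain \<beta> where b: "\<forall>j<m. \<beta> j \<in> Gamma lam" "Poly_Mapping.lookup \<alpha> = (\<lambda>v. \<Sum>j<m. \<beta> j v)"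
          unfolding decomposable_def by blast
        have "\<alpha> = Abs_poly_mapping (\<lambda>v. \<Sum>j<m. \<beta> j v)" using b(2)[symmetric] by simp
        thus ?thesis using dec_I[OF pos b(1)] by simp
      qed
      hence "(\<Sum>\<alpha>\<in>Poly_Mapping.keys f. Poly_Mapping.single 0 (Poly_Mapping.lookup f \<alpha>) * (mon \<alpha> :: ('v,'k) mpoly))
          \<in> ideal_pow ?I m"
        by (intro ip_sum ip_mult) auto
      thus "f \<in> ideal_pow ?I m" using poly_expand[of f] by (simp add: single_mon[symmetric])
    qed
  qed
qed

lemma comb:
  fixes lam :: "'v::finite \<Rightarrow> nat"
  assumes pos: "\<forall>v. lam v > 0"
    and C: "\<forall>a p. (\<forall>v. a v < lam v) \<and> 1 \<le> p \<and> p < card (UNIV :: 'v set) \<and> dotw (omega lam) a \<ge> p * lcm_lam lam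
                 \<longrightarrow> decomposable lam a p"
  shows "p \<ge> 1 \<Longrightarrow> dotw (omega lam) a \<ge> p * lcm_lam lam \<Longrightarrow> decomposable lam a p"
proof (induction p arbitrary: a)
  case 0 thus ?case by simp
next
  case (Suc p)
  let ?L = "lcm_lam lam"
  have Lp: "?L > 0" using L_pos[OF pos] .
  show ?case
  proof (cases "p = 0")
    case True
    hence "a \<in> Gamma lam" using Suc.prems by (simp add: Gamma_def)
    thus ?thesis using True dec_1 by simp
  next
    case p0: False
    show ?thesis
    proof (cases "\<forall>v. a v < lam v")
      case True
      have lt: "omega lam v * a v < ?L" for v
      proof -
        have "omega lam v > 0" using om_lam[of lam v] Lp by (metis gr0I mult_0)
        hence "omega lam v * a v < omega lam v * lam v" using True by simp
        thus ?thesis using om_lam[of lam v] by simp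
      qed
      have "dotw (omega lam) a < (\<Sum>v\<in>(UNIV :: 'v set). ?L)" unfolding dotw_def
        by (rule sum_strict_mono) (simp_all add: lt)
      hence "Suc p * ?L < card (UNIV :: 'v set) * ?L" using Suc.prems by simp
      hence "Suc p < card (UNIV :: 'v set)" by (rule mult_less_cancel2[THEN iffD1, THEN conjunct2])
      thus ?thesis using C True Suc.prems by blast
    next
      case False
      then obtain v where v: "lam v \<le> a v" by (auto simp: not_less)
      define a' where "a' u = (if u = v then a u - lam v else a u)" for u
      define e where "e u = (if u = v then lam v else 0)" for u
      have ae: "a = (\<lambda>u. a' u + e u)" using v by (auto simp: a'_def e_def)
      have de: "dotw (omega lam) e = ?L"
        unfolding dotw_def e_def by (simp add: if_distrib om_lam cong: if_cong)
      have "dotw (omega lam) a = dotw (omega lam) a' + dotw (omega lam) e"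
        unfolding dotw_def by (subst ae) (simp add: distrib_left sum.distrib)
      hence "dotw (omega lam) a' \<ge> p * ?L" using Suc.prems de by simp
      hence "decomposable lam a' p" using Suc.IH p0 by simp
      moreover have "e \<in> Gamma lam" using de by (simp add: Gamma_def)
      ultimately have "decomposable lam (\<lambda>u. a' u + e u) (Suc p)" using dec_add by blast
      thus ?thesis using ae by simp
    qed
  qed
qed

theorem lemma4p3:
  fixes lam :: "'v::finite \<Rightarrow> nat"
  assumes pos: "\<forall>v. lam v > 0"
  shows "(normal_ideal (I_lam lam :: ('v, 'k::field) mpoly set) \<longleftrightarrow>
           (\<forall>a p. p \<ge> 1 \<and> dotw (omega lam) a \<ge> p * lcm_lam lam \<longrightarrow> decomposable lam a p))
       \<and> ((\<forall>a p. p \<ge> 1 \<and> dotw (omega lam) a \<ge> p * lcm_lam lam \<longrightarrow> decomposable lam a p) \<longleftrightarrow>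
           (\<forall>a p. (\<forall>v. a v < lam v) \<and> 1 \<le> p \<and> p < card (UNIV :: 'v set) \<and> dotw (omega lam) a \<ge> p * lcm_lam lam
                 \<longrightarrow> decomposable lam a p))"
proof
  show "normal_ideal (I_lam lam :: ('v, 'k::field) mpoly set) \<longleftrightarrow>
           (\<forall>a p. p \<ge> 1 \<and> dotw (omega lam) a \<ge> p * lcm_lam lam \<longrightarrow> decomposable lam a p)"
    by (rule normal_iff_b[OF pos])
  show "(\<forall>a p. p \<ge> 1 \<and> dotw (omega lam) a \<ge> p * lcm_lam lam \<longrightarrow> decomposable lam a p) \<longleftrightarrow>
           (\<forall>a p. (\<forall>v. a v < lam v) \<and> 1 \<le> p \<and> p < card (UNIV :: 'v set) \<and> dotw (omega lam) a \<ge> p * lcm_lam lam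
                 \<longrightarrow> decomposable lam a p)"
  proof
    assume B: "\<forall>a p. p \<ge> 1 \<and> dotw (omega lam) a \<ge> p * lcm_lam lam \<longrightarrow> decomposable lam a p"
    thus "\<forall>a p. (\<forall>v. a v < lam v) \<and> 1 \<le> p \<and> p < card (UNIV :: 'v set) \<and> dotw (omega lam) a \<ge> p * lcm_lam lam
                 \<longrightarrow> decomposable lam a p" by blast
  next
    assume C: "\<forall>a p. (\<forall>v. a v < lam v) \<and> 1 \<le> p \<and> p < card (UNIV :: 'v set) \<and> dotw (omega lam) a \<ge> p * lcm_lam lam
                 \<longrightarrow> decomposable lam a p"
    show "\<forall>a p. p \<ge> 1 \<and> dotw (omega lam) a \<ge> p * lcm_lam lam \<longrightarrow> decomposable lam a p"
      using comb[OF pos C] by blast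
  qed
qed

end
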